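(* Let $\alpha\ge 0$, $\beta\in\mathbb{R}$, $\gamma\ge 0$, and let $a\in C^2(\mathbb{R}_+)$ satisfy the differential equation $$-(x+\gamma)\,a''(x)-2a'(x)+(\alpha x+\beta)\,a(x)=0,\qquad x>0 .$$ Let $A$ be the Hankel operator $(Af)(x)=\int_0^\infty a(x+y)f(y)\,dy$ and let $L$ be the differential operator $$L=-\frac{d}{dx}\,(x^2+\gamma x)\,\frac{d}{dx}+\alpha x^2+\beta x .$$ Let $f\in C^2(\mathbb{R}_+)$ satisfy $$\lim_{y\to 0}(y^2+\gamma y)f(y)=\lim_{y\to 0}(y^2+\gamma y)f'(y)=0$$ and, for all $x\ge 0$, $$\lim_{y\to\infty}a'(x+y)(y^2+\gamma y)f(y)=\lim_{y\to\infty}a(x+y)(y^2+\gamma y)f'(y)=0 .$$ Then $(LA-AL)f=0$, i.e. $L(Af)=A(Lf)$ on $(0,\infty)$.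
   Context: $\mathbb{R}_+=(0,\infty)$. Here $L$ is understood as a formal differential expression acting on $C^2$ functions on $\mathbb{R}_+$ and $A$ as the integral expression above; it is tacitly assumed (as in the paper) that the integrals defining $Af$, $A(Lf)$ converge and that differentiation under the integral sign in $L(Af)$ is permitted. *)

theory Defs
  imports "HOL-Analysis.Analysis"
begin

definition hankel :: "(real \<Rightarrow> real) \<Rightarrow> (real \<Rightarrow> real) \<Rightarrow> real \<Rightarrow> real" where
  "hankel a f x = integral {0<..} (\<lambda>y. a (x + y) * f y)"

definition Lop :: "real \<Rightarrow> real \<Rightarrow> real \<Rightarrow> (real \<Rightarrow> real) \<Rightarrow> real \<Rightarrow> real" where
  "Lop \<alpha> \<beta> \<gamma> u x = - deriv (\<lambda>t. (t\<^sup>2 + \<gamma> * t) * deriv u t) x + (\<alpha> * x\<^sup>2 + \<beta> * x) * u x"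

end

theory Submission
  imports Defs
begin

lemma improper_zero:
  fixes h H :: "real \<Rightarrow> real"
  assumes hi: "h integrable_on {0<..}"
    and hd: "\<And>y. y > 0 \<Longrightarrow> (H has_real_derivative h y) (at y)"
    and l0: "(H \<longlongrightarrow> 0) (at_right 0)" and li: "(H \<longlongrightarrow> 0) at_top"
  shows "integral {0<..} h = 0"
proof -
  define g where "g = (\<lambda>x. if x \<in> {0<..} then h x else (0::real))"
  have gU: "g integrable_on UNIV" unfolding g_def using hi integrable_restrict_UNIV by blast
  have gi: "g integrable_on {c..d}" for c d
    using integrable_on_subinterval[OF gU] by auto
  have gB: "integral {0..b} g = H b" if b: "b > 0" for b
  proof -
    have ev: "\<forall>\<^sub>F e in at_right 0. integral {0..e} g - H e = integral {0..b} g - H b"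
    proof -
      have "\<forall>\<^sub>F e in at_right (0::real). e \<in> {0<..<b}"
        using b by (simp add: eventually_at_right_field) (metis greaterThanLessThan_iff)
      then show ?thesis
      proof (rule eventually_mono)
        fix e assume e: "e \<in> {0<..<b}"
        have "(h has_integral H b - H e) {e..b}"
          apply (rule fundamental_theorem_of_calculus)
          using e apply simp
          using e by (auto intro!: has_real_derivative_iff_has_vector_derivative[THEN iffD1, THEN has_vector_derivative_at_within] hd)
        moreover have "g x = h x" if "x \<in> {e..b}" for x using that e by (auto simp: g_def)
        ultimately have "(g has_integral H b - H e) {e..b}"
          using has_integral_spike_finite_eq[of "{}" "{e..b}" g h] by auto
        hence "integral {e..b} g = H b - H e" by (rule integral_unique)
        moreover have "integral {0..b} g = integral {0..e} g + integral {e..b} g"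
          using e by (intro Henstock_Kurzweil_Integration.integral_combine[symmetric] gi) auto
        ultimately show "integral {0..e} g - H e = integral {0..b} g - H b" by simp
      qed
    qed
    have c: "continuous_on {0..b} (\<lambda>e. integral {0..e} g)"
      by (rule indefinite_integral_continuous_1[OF gi])
    have "((\<lambda>e. integral {0..e} g) \<longlongrightarrow> integral {0..0} g) (at 0 within {0..b})"
      using c b unfolding continuous_on_def by (metis atLeastAtMost_iff less_eq_real_def order_refl)
    moreover have "at_right (0::real) \<le> at 0 within {0..b}"
    proof -
      have "at_right (0::real) = at 0 within {0<..<b}"
        by (rule at_within_nhd[of 0 "{..<b}"]) (use b in auto)
      also have "\<dots> \<le> at 0 within {0..b}" by (rule at_le) auto
      finally show ?thesis .
    qed
    ultimately have "((\<lambda>e. integral {0..e} g) \<longlongrightarrow> 0) (at_right 0)"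
      by (auto intro: tendsto_mono)
    hence "((\<lambda>e. integral {0..e} g - H e) \<longlongrightarrow> 0) (at_right 0)"
      using tendsto_diff[OF _ l0] by fastforce
    moreover have "((\<lambda>e. integral {0..e} g - H e) \<longlongrightarrow> integral {0..b} g - H b) (at_right 0)"
      by (rule tendsto_eventually[OF ev])
    ultimately have "0 = integral {0..b} g - H b"
      by (rule tendsto_unique[OF trivial_limit_at_right_real])
    thus ?thesis by simp
  qed
  have gB2: "integral {-b..b} g = H b" if b: "b > 0" for b
  proof -
    have "integral {-b..0} g = 0"
      proof - have "integral {-b..0} g = integral {-b..0} (\<lambda>x. 0::real)" by (rule integral_cong) (auto simp: g_def) thus ?thesis by simp qed
    moreover have "integral {-b..b} g = integral {-b..0} g + integral {0..b} g"
      using b by (intro Henstock_Kurzweil_Integration.integral_combine[symmetric] gi) auto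
    ultimately show ?thesis using gB[OF b] by simp
  qed
  define I where "I = integral {0<..} h"
  have hI: "(h has_integral I) {0<..}" unfolding I_def using hi by blast
  have nc: "\<not> (\<exists>a b. {0<..} = cbox a (b::real))"
  proof
    assume "\<exists>a b. {0<..} = cbox a (b::real)"
    then obtain a b where ab: "{0<..} = cbox a (b::real)" by blast
    have "max b 1 + 1 \<in> cbox a b" unfolding ab[symmetric] by auto
    hence "max b 1 + 1 \<le> b" by (simp add: cbox_interval)
    thus False by linarith
  qed
  have "(H \<longlongrightarrow> I) at_top"
  proof (rule tendstoI)
    fix e :: real assume e: "e > 0"
    obtain B where B: "B > 0" "\<forall>a b. ball 0 B \<subseteq> cbox a b \<longrightarrow>
      (\<exists>z. (g has_integral z) (cbox a b) \<and> norm (z - I) < e)"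
      using has_integral_altD[OF hI nc e] unfolding g_def by metis
    show "\<forall>\<^sub>F x in at_top. dist (H x) I < e"
    proof (rule eventually_at_top_linorderI[of B])
      fix x assume x: "x \<ge> B"
      have "ball 0 B \<subseteq> cbox (-x) x" using x by (auto simp: dist_real_def)
      then obtain z where z: "(g has_integral z) (cbox (-x) x)" "norm (z - I) < e" using B by blast
      have "z = H x" using z(1) gB2[of x] x B(1) integral_unique[OF z(1)] by simp
      thus "dist (H x) I < e" using z(2) by (simp add: dist_real_def)
    qed
  qed
  hence "I = 0" using tendsto_unique[OF _ _ li] by auto
  thus ?thesis unfolding I_def .
qed

theorem theorem2p1:
  fixes \<alpha> \<beta> \<gamma> :: real
    and a a1 a2 f f1 f2 :: "real \<Rightarrow> real"
  assumes "\<alpha> \<ge> 0" and "\<gamma> \<ge> 0"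
    \<comment> \<open>a is C^2 on (0,inf) with derivatives a1, a2\<close>
    and a_d1: "\<And>x. x > 0 \<Longrightarrow> (a has_real_derivative a1 x) (at x)"
    and a_d2: "\<And>x. x > 0 \<Longrightarrow> (a1 has_real_derivative a2 x) (at x)"
    and a_c2: "continuous_on {0<..} a2"
    \<comment> \<open>the differential equation for a\<close>
    and a_ode: "\<And>x. x > 0 \<Longrightarrow> - (x + \<gamma>) * a2 x - 2 * a1 x + (\<alpha> * x + \<beta>) * a x = 0"
    \<comment> \<open>f is C^2 on (0,inf) with derivatives f1, f2\<close>
    and f_d1: "\<And>x. x > 0 \<Longrightarrow> (f has_real_derivative f1 x) (at x)"
    and f_d2: "\<And>x. x > 0 \<Longrightarrow> (f1 has_real_derivative f2 x) (at x)"
    and f_c2: "continuous_on {0<..} f2"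
    \<comment> \<open>boundary conditions\<close>
    and lim0_f: "((\<lambda>y. (y\<^sup>2 + \<gamma> * y) * f y) \<longlongrightarrow> 0) (at_right 0)"
    and lim0_f1: "((\<lambda>y. (y\<^sup>2 + \<gamma> * y) * f1 y) \<longlongrightarrow> 0) (at_right 0)"
    and liminf_f: "\<And>x. x \<ge> 0 \<Longrightarrow> ((\<lambda>y. a1 (x + y) * (y\<^sup>2 + \<gamma> * y) * f y) \<longlongrightarrow> 0) at_top"
    and liminf_f1: "\<And>x. x \<ge> 0 \<Longrightarrow> ((\<lambda>y. a (x + y) * (y\<^sup>2 + \<gamma> * y) * f1 y) \<longlongrightarrow> 0) at_top"
    \<comment> \<open>tacit assumptions: the integrals defining Af, A(Lf) converge, and
        differentiation under the integral sign in L(Af) is permitted\<close>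
    and int_a: "\<And>x. x > 0 \<Longrightarrow> (\<lambda>y. a (x + y) * f y) integrable_on {0<..}"
    and int_a1: "\<And>x. x > 0 \<Longrightarrow> (\<lambda>y. a1 (x + y) * f y) integrable_on {0<..}"
    and int_a2: "\<And>x. x > 0 \<Longrightarrow> (\<lambda>y. a2 (x + y) * f y) integrable_on {0<..}"
    and int_Lf: "\<And>x. x > 0 \<Longrightarrow> (\<lambda>y. a (x + y) * Lop \<alpha> \<beta> \<gamma> f y) integrable_on {0<..}"
    and diff_A: "\<And>x. x > 0 \<Longrightarrow> (hankel a f has_real_derivative hankel a1 f x) (at x)"
    and diff_A1: "\<And>x. x > 0 \<Longrightarrow> (hankel a1 f has_real_derivative hankel a2 f x) (at x)"
  shows "\<forall>x>0. Lop \<alpha> \<beta> \<gamma> (hankel a f) x = hankel a (Lop \<alpha> \<beta> \<gamma> f) x"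
proof (intro allI impI)
  fix x :: real assume x: "x > 0"
  define A0 where "A0 = hankel a f x"
  define A1 where "A1 = hankel a1 f x"
  define A2 where "A2 = hankel a2 f x"
  have dA: "deriv (hankel a f) t = hankel a1 f t" if "t > 0" for t
    using diff_A[OF that] by (rule DERIV_imp_deriv)
  have dd: "((\<lambda>t. (t\<^sup>2 + \<gamma> * t) * deriv (hankel a f) t) has_real_derivative
              ((2*x+\<gamma>)*A1 + (x\<^sup>2+\<gamma>*x)*A2)) (at x)"
  proof (rule has_field_derivative_transform_within_open[where S="{0<..}" and f="\<lambda>t. (t\<^sup>2 + \<gamma> * t) * hankel a1 f t"])
    show "((\<lambda>t. (t\<^sup>2 + \<gamma> * t) * hankel a1 f t) has_real_derivative ((2*x+\<gamma>)*A1 + (x\<^sup>2+\<gamma>*x)*A2)) (at x)"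
      using diff_A1[OF x] unfolding A1_def A2_def
      by (auto intro!: derivative_eq_intros simp: algebra_simps)
  qed (use x dA in auto)
  have LHS: "Lop \<alpha> \<beta> \<gamma> (hankel a f) x = -((2*x+\<gamma>)*A1 + (x\<^sup>2+\<gamma>*x)*A2) + (\<alpha>*x\<^sup>2+\<beta>*x)*A0"
    unfolding Lop_def using DERIV_imp_deriv[OF dd] by (simp add: A0_def)
  have i0: "((\<lambda>y. a (x+y) * f y) has_integral A0) {0<..}"
    unfolding A0_def hankel_def using int_a[OF x] by blast
  have i1: "((\<lambda>y. a1 (x+y) * f y) has_integral A1) {0<..}"
    unfolding A1_def hankel_def using int_a1[OF x] by blast
  have i2: "((\<lambda>y. a2 (x+y) * f y) has_integral A2) {0<..}"
    unfolding A2_def hankel_def using int_a2[OF x] by blast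
  define K where "K = (\<lambda>y. (-(2*x+\<gamma>)*a1(x+y) - (x\<^sup>2+\<gamma>*x)*a2(x+y) + (\<alpha>*x\<^sup>2+\<beta>*x)*a(x+y)) * f y)"
  have "((\<lambda>y. (-(2*x+\<gamma>))*(a1(x+y)*f y) + (-(x\<^sup>2+\<gamma>*x))*(a2(x+y)*f y) + (\<alpha>*x\<^sup>2+\<beta>*x)*(a(x+y)*f y))
        has_integral ((-(2*x+\<gamma>))*A1 + (-(x\<^sup>2+\<gamma>*x))*A2 + (\<alpha>*x\<^sup>2+\<beta>*x)*A0)) {0<..}"
    by (intro has_integral_add has_integral_mult_right i0 i1 i2)
  moreover have "(\<lambda>y. (-(2*x+\<gamma>))*(a1(x+y)*f y) + (-(x\<^sup>2+\<gamma>*x))*(a2(x+y)*f y) + (\<alpha>*x\<^sup>2+\<beta>*x)*(a(x+y)*f y)) = K"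
    by (auto simp: K_def fun_eq_iff algebra_simps)
  moreover have "(-(2*x+\<gamma>))*A1 + (-(x\<^sup>2+\<gamma>*x))*A2 + (\<alpha>*x\<^sup>2+\<beta>*x)*A0 = Lop \<alpha> \<beta> \<gamma> (hankel a f) x"
    unfolding LHS by (simp add: algebra_simps)
  ultimately have Kint: "(K has_integral Lop \<alpha> \<beta> \<gamma> (hankel a f) x) {0<..}" by simp
  have df: "deriv f t = f1 t" if "t > 0" for t
    using f_d1[OF that] by (rule DERIV_imp_deriv)
  have Lf: "Lop \<alpha> \<beta> \<gamma> f y = -((2*y+\<gamma>)*f1 y + (y\<^sup>2+\<gamma>*y)*f2 y) + (\<alpha>*y\<^sup>2+\<beta>*y)*f y" if y: "y > 0" for y
  proof -
    have "((\<lambda>t. (t\<^sup>2 + \<gamma> * t) * deriv f t) has_real_derivative ((2*y+\<gamma>)*f1 y + (y\<^sup>2+\<gamma>*y)*f2 y)) (at y)"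
    proof (rule has_field_derivative_transform_within_open[where S="{0<..}" and f="\<lambda>t. (t\<^sup>2 + \<gamma> * t) * f1 t"])
      show "((\<lambda>t. (t\<^sup>2 + \<gamma> * t) * f1 t) has_real_derivative ((2*y+\<gamma>)*f1 y + (y\<^sup>2+\<gamma>*y)*f2 y)) (at y)"
        using f_d2[OF y] by (auto intro!: derivative_eq_intros simp: algebra_simps)
    qed (use y df in auto)
    from DERIV_imp_deriv[OF this] show ?thesis unfolding Lop_def by simp
  qed
  define h where "h = (\<lambda>y. a (x+y) * Lop \<alpha> \<beta> \<gamma> f y - K y)"
  define H where "H = (\<lambda>y. a1 (x+y) * ((y\<^sup>2+\<gamma>*y) * f y) - a (x+y) * ((y\<^sup>2+\<gamma>*y) * f1 y))"
  have hint: "h integrable_on {0<..}"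
    unfolding h_def using int_Lf[OF x] Kint by (intro integrable_diff) auto
  have Hd: "(H has_real_derivative h y) (at y)" if y: "y > 0" for y
  proof -
    have xy: "x + y > 0" using x y by simp
    have l1: "((\<lambda>y. x+y) has_real_derivative 1) (at y)" by (auto intro!: derivative_eq_intros)
    have ad: "((\<lambda>y. a (x+y)) has_real_derivative a1 (x+y)) (at y)"
      using DERIV_chain2[of a "a1 (x+y)" "\<lambda>y. x+y" y 1 UNIV] a_d1[OF xy] l1
      by simp
    have a1d: "((\<lambda>y. a1 (x+y)) has_real_derivative a2 (x+y)) (at y)"
      using DERIV_chain2[of a1 "a2 (x+y)" "\<lambda>y. x+y" y 1 UNIV] a_d2[OF xy] l1
      by simp
    define E where "E = a2 (x+y) * ((y\<^sup>2+\<gamma>*y) * f y) + a1 (x+y) * ((2*y+\<gamma>) * f y + (y\<^sup>2+\<gamma>*y) * f1 y)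
       - (a1 (x+y) * ((y\<^sup>2+\<gamma>*y) * f1 y) + a (x+y) * ((2*y+\<gamma>) * f1 y + (y\<^sup>2+\<gamma>*y) * f2 y))"
    have "(H has_real_derivative E) (at y)"
      unfolding H_def E_def
      by ((rule derivative_eq_intros ad a1d f_d1[OF y] f_d2[OF y] refl | simp)+, simp add: algebra_simps)
    moreover have "E = h y"
    proof -
      have ode: "- ((x+y) + \<gamma>) * a2 (x+y) - 2 * a1 (x+y) + (\<alpha> * (x+y) + \<beta>) * a (x+y) = 0"
        using a_ode[OF xy] .
      have "E - h y = - ((y - x) * f y) * (- ((x+y) + \<gamma>) * a2 (x+y) - 2 * a1 (x+y) + (\<alpha> * (x+y) + \<beta>) * a (x+y))"
        unfolding E_def h_def K_def Lf[OF y] by (simp add: algebra_simps power2_eq_square)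
      with ode show ?thesis by simp
    qed
    ultimately show ?thesis by simp
  qed
  have cont: "((\<lambda>y. x + y) \<longlongrightarrow> x) (at_right 0)"
    using tendsto_add[OF tendsto_const[of x] tendsto_ident_at[of 0 "{0<..}"]] by simp
  have ca: "((\<lambda>y. a (x+y)) \<longlongrightarrow> a x) (at_right 0)"
    by (rule isCont_tendsto_compose[OF DERIV_isCont[OF a_d1[OF x]] cont])
  have ca1: "((\<lambda>y. a1 (x+y)) \<longlongrightarrow> a1 x) (at_right 0)"
    by (rule isCont_tendsto_compose[OF DERIV_isCont[OF a_d2[OF x]] cont])
  have H0: "(H \<longlongrightarrow> 0) (at_right 0)"
    using tendsto_diff[OF tendsto_mult[OF ca1 lim0_f] tendsto_mult[OF ca lim0_f1]]
    unfolding H_def by simp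
  have Hi: "(H \<longlongrightarrow> 0) at_top"
    using tendsto_diff[OF liminf_f liminf_f1] x unfolding H_def by (simp add: mult.assoc)
  have "integral {0<..} h = 0"
    by (rule improper_zero[OF hint Hd H0 Hi])
  moreover have "integral {0<..} h = hankel a (Lop \<alpha> \<beta> \<gamma> f) x - Lop \<alpha> \<beta> \<gamma> (hankel a f) x"
    unfolding h_def hankel_def[of a "Lop \<alpha> \<beta> \<gamma> f"]
    using integral_diff[OF int_Lf[OF x] has_integral_integrable[OF Kint]] integral_unique[OF Kint]
    by simp
  ultimately show "Lop \<alpha> \<beta> \<gamma> (hankel a f) x = hankel a (Lop \<alpha> \<beta> \<gamma> f) x" by simp
qed

end
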